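(* For any positive integer $T$, $x \in \{0,1\}^T$ and $p \in [0,1]^T$, $$\mathsf{smCE}(x,p) \le \left|\sum_{\alpha \in [0,1]} \Delta_\alpha\right| + \sum_{\alpha \in [0,1]} |\alpha - 1/2|\cdot|\Delta_\alpha|,$$ where $\Delta_\alpha = \sum_{t=1}^T (x_t - p_t)\mathbf{1}[p_t = \alpha]$.
   Context: $\mathsf{smCE}(x,p) = \sup_{f \in \mathcal{F}} \sum_{t=1}^T f(p_t)(x_t - p_t)$, where $\mathcal{F}$ is the family of $1$-Lipschitz functions from $[0,1]$ to $[-1,1]$. Sums over $\alpha \in [0,1]$ have only finitely many nonzero terms. *)

theory Defs
  imports "HOL-Analysis.Analysis"
begin

definition lipF :: "(real \<Rightarrow> real) set" where
  "lipF = {f. (\<forall>a\<in>{0..1}. f a \<in> {-1..1}) \<and>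
              (\<forall>a\<in>{0..1}. \<forall>b\<in>{0..1}. \<bar>f a - f b\<bar> \<le> \<bar>a - b\<bar>)}"

definition smCE :: "nat \<Rightarrow> (nat \<Rightarrow> real) \<Rightarrow> (nat \<Rightarrow> real) \<Rightarrow> real" where
  "smCE T x p = (SUP f\<in>lipF. \<Sum>t=1..T. f (p t) * (x t - p t))"

definition Delta :: "nat \<Rightarrow> (nat \<Rightarrow> real) \<Rightarrow> (nat \<Rightarrow> real) \<Rightarrow> real \<Rightarrow> real" where
  "Delta T x p \<alpha> = (\<Sum>t=1..T. (x t - p t) * (if p t = \<alpha> then 1 else 0))"

text \<open>Sum over \<alpha> \<in> [0,1] of a function with finitely many nonzero terms:
  summed over its support in [0,1].\<close>
definition sum01 :: "(real \<Rightarrow> real) \<Rightarrow> real" where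
  "sum01 g = sum g {\<alpha>\<in>{0..1}. g \<alpha> \<noteq> 0}"

end

theory Submission
  imports Defs
begin

lemma regroup:
  fixes T :: nat and x p :: "nat \<Rightarrow> real" and h :: "real \<Rightarrow> real"
  shows "(\<Sum>t=1..T. h (p t) * (x t - p t)) = (\<Sum>a\<in>p ` {1..T}. h a * Delta T x p a)"
proof -
  have "(\<Sum>t=1..T. h (p t) * (x t - p t)) =
     (\<Sum>a\<in>p ` {1..T}. \<Sum>t\<in>{t\<in>{1..T}. p t = a}. h (p t) * (x t - p t))"
    by (rule sum.image_gen) simp
  also have "\<dots> = (\<Sum>a\<in>p ` {1..T}. h a * Delta T x p a)"
  proof (rule sum.cong[OF refl])
    fix a
    have "(\<Sum>t\<in>{t\<in>{1..T}. p t = a}. h (p t) * (x t - p t)) = (\<Sum>t\<in>{t\<in>{1..T}. p t = a}. h a * (x t - p t))"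
      by (rule sum.cong) auto
    also have "\<dots> = h a * (\<Sum>t\<in>{t\<in>{1..T}. p t = a}. (x t - p t))"
      by (simp add: sum_distrib_left)
    also have "(\<Sum>t\<in>{t\<in>{1..T}. p t = a}. (x t - p t)) = Delta T x p a"
      unfolding Delta_def by (simp add: sum.inter_filter[symmetric] if_distrib cong: if_cong)
    finally show "(\<Sum>t\<in>{t\<in>{1..T}. p t = a}. h (p t) * (x t - p t)) = h a * Delta T x p a" by simp
  qed
  finally show ?thesis .
qed

lemma sum01_eq:
  assumes "P \<subseteq> {0..1}" "finite P" "\<And>a. g a \<noteq> 0 \<Longrightarrow> a \<in> P"
  shows "sum01 g = sum g P"
  unfolding sum01_def
  by (rule sum.mono_neutral_left) (use assms in auto)

theorem lemma6:
  fixes T :: nat and x p :: "nat \<Rightarrow> real"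
  assumes "T \<ge> 1"
    and "\<forall>t\<in>{1..T}. x t \<in> {0, 1}"
    and "\<forall>t\<in>{1..T}. p t \<in> {0..1}"
  shows "smCE T x p \<le> \<bar>sum01 (Delta T x p)\<bar>
           + sum01 (\<lambda>\<alpha>. \<bar>\<alpha> - 1/2\<bar> * \<bar>Delta T x p \<alpha>\<bar>)"
proof -
  define P where "P = p ` {1..T}"
  have Psub: "P \<subseteq> {0..1}" using assms(3) P_def by auto
  have Pfin: "finite P" unfolding P_def by simp
  have DP: "a \<in> P" if "Delta T x p a \<noteq> 0" for a
  proof (rule ccontr)
    assume "a \<notin> P"
    then have "\<forall>t\<in>{1..T}. p t \<noteq> a" unfolding P_def by auto
    then have "Delta T x p a = 0" unfolding Delta_def by simp
    then show False using that by simp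
  qed
  have s1: "sum01 (Delta T x p) = sum (Delta T x p) P"
    by (rule sum01_eq[OF Psub Pfin]) (use DP in auto)
  have s2: "sum01 (\<lambda>\<alpha>. \<bar>\<alpha> - 1/2\<bar> * \<bar>Delta T x p \<alpha>\<bar>) = (\<Sum>a\<in>P. \<bar>a - 1/2\<bar> * \<bar>Delta T x p a\<bar>)"
    by (rule sum01_eq[OF Psub Pfin]) (use DP in auto)
  have bound: "(\<Sum>t=1..T. f (p t) * (x t - p t)) \<le> \<bar>sum (Delta T x p) P\<bar> + (\<Sum>a\<in>P. \<bar>a - 1/2\<bar> * \<bar>Delta T x p a\<bar>)"
    if f: "f \<in> lipF" for f
  proof -
    have fh: "f (1/2) \<in> {-1..1}" using f unfolding lipF_def by auto
    have fl: "\<bar>f a - f (1/2)\<bar> \<le> \<bar>a - 1/2\<bar>" if "a \<in> P" for a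
      using f Psub that unfolding lipF_def by auto
    have "(\<Sum>t=1..T. f (p t) * (x t - p t)) = (\<Sum>a\<in>P. f a * Delta T x p a)"
      unfolding P_def by (rule regroup)
    also have "\<dots> = f (1/2) * sum (Delta T x p) P + (\<Sum>a\<in>P. (f a - f (1/2)) * Delta T x p a)"
      by (simp add: sum_distrib_left sum_distrib_right sum_subtractf algebra_simps)
    also have "\<dots> \<le> \<bar>sum (Delta T x p) P\<bar> + (\<Sum>a\<in>P. \<bar>a - 1/2\<bar> * \<bar>Delta T x p a\<bar>)"
    proof (rule add_mono)
      show "f (1/2) * sum (Delta T x p) P \<le> \<bar>sum (Delta T x p) P\<bar>"
      proof -
        have "f (1/2) * sum (Delta T x p) P \<le> \<bar>f (1/2)\<bar> * \<bar>sum (Delta T x p) P\<bar>"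
          by (metis abs_ge_self abs_mult)
        also have "\<dots> \<le> 1 * \<bar>sum (Delta T x p) P\<bar>"
          by (rule mult_right_mono) (use fh in auto)
        finally show ?thesis by simp
      qed
      show "(\<Sum>a\<in>P. (f a - f (1/2)) * Delta T x p a) \<le> (\<Sum>a\<in>P. \<bar>a - 1/2\<bar> * \<bar>Delta T x p a\<bar>)"
      proof (rule sum_mono)
        fix a assume a: "a \<in> P"
        have "(f a - f (1/2)) * Delta T x p a \<le> \<bar>f a - f (1/2)\<bar> * \<bar>Delta T x p a\<bar>"
          by (metis abs_ge_self abs_mult)
        also have "\<dots> \<le> \<bar>a - 1/2\<bar> * \<bar>Delta T x p a\<bar>"
          by (rule mult_right_mono) (use fl[OF a] in auto)
        finally show "(f a - f (1/2)) * Delta T x p a \<le> \<bar>a - 1/2\<bar> * \<bar>Delta T x p a\<bar>" .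
      qed
    qed
    finally show ?thesis .
  qed
  have ne: "lipF \<noteq> {}"
  proof -
    have "(\<lambda>_. 0) \<in> lipF" unfolding lipF_def by auto
    then show ?thesis by blast
  qed
  have "smCE T x p \<le> \<bar>sum (Delta T x p) P\<bar> + (\<Sum>a\<in>P. \<bar>a - 1/2\<bar> * \<bar>Delta T x p a\<bar>)"
    unfolding smCE_def by (rule cSUP_least[OF ne bound])
  then show ?thesis using s1 s2 by simp
qed

end
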